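(* Let $N\ge 2$, let $s_1(0),\dots,s_N(0)\in\mathbb R$, and let $s^*$ lie in the convex hull of $\{s_1(0),\dots,s_N(0)\}$. Then there exist weights $a_{ij}\ge 0$ ($1\le i\ne j\le N$) such that the solution of $s_i'=\sum_{j\ne i}a_{ij}(s_j-s_i)$, $i=1,\dots,N$, with these initial opinions satisfies $\lim_{t\to\infty}\mathbf s(t)=s^*(1,\dots,1)^T$. *)

theory Defs
  imports "HOL-Analysis.Analysis"
begin

text \<open>The opinion profile at time t is s t :: nat => real
  (only indices in 1..N matter). s solves the linear opinion dynamics
  s_i' = sum_{j /= i} a_ij (s_j - s_i) on [0, infinity) with initial opinions s0.\<close>

definition opinion_solution ::
  "nat \<Rightarrow> (nat \<Rightarrow> nat \<Rightarrow> real) \<Rightarrow> (nat \<Rightarrow> real) \<Rightarrow> (real \<Rightarrow> nat \<Rightarrow> real) \<Rightarrow> bool" where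
  "opinion_solution N a s0 s \<longleftrightarrow>
     (\<forall>i\<in>{1..N}. s 0 i = s0 i) \<and>
     (\<forall>i\<in>{1..N}. \<forall>t\<ge>0.
        ((\<lambda>\<tau>. s \<tau> i) has_real_derivative
           (\<Sum>j\<in>{1..N} - {i}. a i j * (s t j - s t i))) (at t within {0..}))"

end

theory Submission imports Defs "HOL-Analysis.Analysis" begin

lemma exp_unique:
  fixes f :: "real \<Rightarrow> real" and c :: real
  assumes d: "\<forall>t\<ge>0. (f has_real_derivative (-c * f t)) (at t within {0..})" and t: "t \<ge> 0"
  shows "f t = f 0 * exp (-c*t)"
proof -
  have "\<exists>k. \<forall>x\<in>{0::real..}. f x * exp (c*x) = k"
  proof (rule has_field_derivative_zero_constant)
    fix x :: real assume "x \<in> {0..}"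
    hence "(f has_real_derivative (-c * f x)) (at x within {0..})" using d by auto
    hence "((\<lambda>x. f x * exp (c*x)) has_real_derivative ((-c * f x) * exp (c*x) + f x * (exp (c*x) * (c*1)))) (at x within {0..})"
      by (auto intro!: derivative_eq_intros)
    thus "((\<lambda>x. f x * exp (c*x)) has_real_derivative 0) (at x within {0..})"
      by (simp add: algebra_simps)
  qed simp
  then obtain k where k: "\<forall>x\<in>{0::real..}. f x * exp (c*x) = k" by blast
  have "f t * exp (c*t) = f 0" using k t by (metis atLeast_iff mult_zero_right exp_zero mult_1_right order_refl)
  hence "f t = f 0 * exp (-c*t)" by (simp add: exp_minus field_simps)
  thus ?thesis .
qed

lemma sum_single:
  fixes a x :: "nat \<Rightarrow> real"
  assumes "j0 \<in> A" "finite A" "\<forall>j\<in>A. j \<noteq> j0 \<longrightarrow> a j = 0"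
  shows "(\<Sum>j\<in>A. a j * x j) = a j0 * x j0"
proof -
  have "(\<Sum>j\<in>A. a j * x j) = (\<Sum>j\<in>A. if j = j0 then a j0 * x j0 else 0)"
    using assms by (intro sum.cong) auto
  thus ?thesis using assms by simp
qed

lemma lim1: "((\<lambda>t::real. S + C * exp (-c*t)) \<longlongrightarrow> S) at_top" if "c > 0" for c C S :: real
proof -
  have "filterlim (\<lambda>t::real. c*t) at_top at_top"
    using that by (intro filterlim_tendsto_pos_mult_at_top[OF tendsto_const] filterlim_ident) auto
  hence "filterlim (\<lambda>t::real. exp (c*t)) at_top at_top"
    by (rule filterlim_compose[OF exp_at_top])
  hence "((\<lambda>t::real. inverse (exp (c*t))) \<longlongrightarrow> 0) at_top"
    by (rule tendsto_inverse_0_at_top)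
  hence "((\<lambda>t::real. S + C * exp (-c*t)) \<longlongrightarrow> S + C * 0) at_top"
    by (intro tendsto_intros) (simp add: exp_minus)
  thus ?thesis by simp
qed

lemma hull_bd:
  fixes A :: "real set"
  assumes "finite A" "A \<noteq> {}" "x \<in> convex hull A"
  shows "Min A \<le> x \<and> x \<le> Max A"
proof -
  have "convex hull A \<subseteq> {Min A..Max A}"
    using assms by (intro hull_minimal) (auto simp: convex_real_interval)
  thus ?thesis using assms by auto
qed

lemma lim2: "((\<lambda>t::real. S + C * exp (-c*t) + E * exp (-e*t)) \<longlongrightarrow> S) at_top"
  if "c > 0" "e > 0" for c C S E e :: real
proof -
  have "((\<lambda>t::real. (S + C * exp (-c*t)) + (0 + E * exp (-e*t))) \<longlongrightarrow> S + 0) at_top"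
    by (intro tendsto_add lim1 that)
  thus ?thesis by (simp add: add.assoc)
qed

lemma sol_deriv:
  assumes "opinion_solution N a s0 s" "i \<in> {1..N}" "j0 \<in> {1..N}" "j0 \<noteq> i"
    "\<forall>j\<in>{1..N}. j \<noteq> i \<longrightarrow> j \<noteq> j0 \<longrightarrow> a i j = 0" "t \<ge> 0"
  shows "((\<lambda>\<tau>. s \<tau> i) has_real_derivative a i j0 * (s t j0 - s t i)) (at t within {0..})"
proof -
  have "(\<Sum>j\<in>{1..N} - {i}. a i j * (s t j - s t i)) = a i j0 * (s t j0 - s t i)"
    using assms(3-5) by (intro sum_single[where a="a i" and x="\<lambda>j. s t j - s t i"]) auto
  moreover have "((\<lambda>\<tau>. s \<tau> i) has_real_derivative (\<Sum>j\<in>{1..N} - {i}. a i j * (s t j - s t i))) (at t within {0..})"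
    using assms(1,2,6) unfolding opinion_solution_def by blast
  ultimately show ?thesis by simp
qed

lemma sol_deriv0:
  assumes "opinion_solution N a s0 s" "i \<in> {1..N}"
    "\<forall>j\<in>{1..N}. j \<noteq> i \<longrightarrow> a i j = 0" "t \<ge> 0"
  shows "((\<lambda>\<tau>. s \<tau> i) has_real_derivative 0) (at t within {0..})"
proof -
  have "(\<Sum>j\<in>{1..N} - {i}. a i j * (s t j - s t i)) = 0"
    using assms(3) by (intro sum.neutral) auto
  moreover have "((\<lambda>\<tau>. s \<tau> i) has_real_derivative (\<Sum>j\<in>{1..N} - {i}. a i j * (s t j - s t i))) (at t within {0..})"
    using assms(1,2,4) unfolding opinion_solution_def by blast
  ultimately show ?thesis by simp
qed

lemma ev_lim:
  fixes f g :: "real \<Rightarrow> real"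
  assumes "\<forall>t\<ge>0. f t = g t" "(g \<longlongrightarrow> l) at_top"
  shows "(f \<longlongrightarrow> (l::real)) at_top"
proof -
  have "eventually (\<lambda>t. g t = f t) at_top"
  proof (rule eventually_mono[OF eventually_ge_at_top[of "0::real"]])
    fix t :: real assume "t \<ge> 0" thus "g t = f t" using assms(1) by simp
  qed
  from assms(2) this show ?thesis by (rule Lim_transform_eventually)
qed

theorem mainTheorem9:
  fixes N :: nat and s0 :: "nat \<Rightarrow> real" and sstar :: real
  assumes "N \<ge> 2"
    and "sstar \<in> convex hull (s0 ` {1..N})"
  shows "\<exists>a :: nat \<Rightarrow> nat \<Rightarrow> real.
           (\<forall>i\<in>{1..N}. \<forall>j\<in>{1..N}. i \<noteq> j \<longrightarrow> a i j \<ge> 0) \<and>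
           (\<exists>s. opinion_solution N a s0 s) \<and>
           (\<forall>s. opinion_solution N a s0 s \<longrightarrow>
                (\<forall>i\<in>{1..N}. ((\<lambda>t. s t i) \<longlongrightarrow> sstar) at_top))"
proof (cases "\<exists>k\<in>{1..N}. s0 k = sstar")
  case True
  then obtain k where k: "k \<in> {1..N}" "s0 k = sstar" by blast
  define a :: "nat \<Rightarrow> nat \<Rightarrow> real" where "a = (\<lambda>i j. if j = k \<and> i \<noteq> k then 1 else 0)"
  define S where "S = (\<lambda>t i. if i = k then sstar else sstar + (s0 i - sstar) * exp (-1*t))"
  have ex: "opinion_solution N a s0 S"
    unfolding opinion_solution_def
  proof (intro conjI ballI allI impI)
    fix i assume "i \<in> {1..N}" thus "S 0 i = s0 i" using k by (simp add: S_def)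
  next
    fix i t assume i: "i \<in> {1..N}" and t: "(0::real) \<le> t"
    show "((\<lambda>\<tau>. S \<tau> i) has_real_derivative (\<Sum>j\<in>{1..N} - {i}. a i j * (S t j - S t i))) (at t within {0..})"
    proof (cases "i = k")
      case True
      have "(\<Sum>j\<in>{1..N} - {i}. a i j * (S t j - S t i)) = 0"
        using True by (intro sum.neutral) (auto simp: a_def)
      thus ?thesis using True by (simp add: S_def)
    next
      case False
      have "(\<Sum>j\<in>{1..N} - {i}. a i j * (S t j - S t i)) = a i k * (S t k - S t i)"
        using False k by (intro sum_single[where a="a i" and x="\<lambda>j. S t j - S t i"]) (auto simp: a_def)
      also have "\<dots> = (s0 i - sstar) * (exp (-1*t) * (- 1))" using False by (simp add: a_def S_def)
      finally have e: "(\<Sum>j\<in>{1..N} - {i}. a i j * (S t j - S t i)) = (s0 i - sstar) * (exp (-1*t) * (- 1))" .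
      have "((\<lambda>\<tau>. sstar + (s0 i - sstar) * exp (-1*\<tau>)) has_real_derivative (s0 i - sstar) * (exp (-1*t) * (- 1))) (at t within {0..})"
        by (auto intro!: derivative_eq_intros)
      thus ?thesis unfolding e using False by (simp add: S_def)
    qed
  qed
  have conv: "((\<lambda>t. s t i) \<longlongrightarrow> sstar) at_top" if s: "opinion_solution N a s0 s" and i: "i \<in> {1..N}" for s i
  proof -
    have s0e: "s 0 j = s0 j" if "j \<in> {1..N}" for j using s that unfolding opinion_solution_def by blast
    have sk: "s t k = sstar" if t: "t \<ge> 0" for t
    proof -
      have "\<forall>t\<ge>0. ((\<lambda>\<tau>. s \<tau> k) has_real_derivative (-0 * s t k)) (at t within {0..})"
        using sol_deriv0[OF s k(1)] by (simp add: a_def)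
      from exp_unique[OF this t] have "s t k = s 0 k" by simp
      thus ?thesis using s0e[OF k(1)] k(2) by simp
    qed
    show ?thesis
    proof (cases "i = k")
      case True
      have "\<forall>t\<ge>0. s t i = sstar" using sk True by simp
      thus ?thesis by (rule ev_lim) (rule tendsto_const)
    next
      case False
      have "\<forall>t\<ge>0. ((\<lambda>\<tau>. s \<tau> i - sstar) has_real_derivative (-1 * (s t i - sstar))) (at t within {0..})"
      proof (intro allI impI)
        fix t :: real assume t: "t \<ge> 0"
        have "((\<lambda>\<tau>. s \<tau> i) has_real_derivative a i k * (s t k - s t i)) (at t within {0..})"
          using sol_deriv[OF s i k(1)] False t by (auto simp: a_def)
        hence "((\<lambda>\<tau>. s \<tau> i - sstar) has_real_derivative a i k * (s t k - s t i) - 0) (at t within {0..})"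
          by (intro derivative_intros)
        thus "((\<lambda>\<tau>. s \<tau> i - sstar) has_real_derivative (-1 * (s t i - sstar))) (at t within {0..})"
          using False sk[OF t] by (simp add: a_def)
      qed
      from exp_unique[OF this] have h: "\<And>t. t \<ge> 0 \<Longrightarrow> s t i - sstar = (s0 i - sstar) * exp (-1*t)"
        using s0e[OF i] by simp
      have "\<forall>t\<ge>0. s t i = sstar + (s0 i - sstar) * exp (-1*t)"
      proof (intro allI impI)
        fix t :: real assume "t \<ge> 0" from h[OF this] show "s t i = sstar + (s0 i - sstar) * exp (-1*t)" by linarith
      qed
      thus ?thesis by (rule ev_lim) (rule lim1, simp)
    qed
  qed
  show ?thesis
    by (rule exI[of _ a]) (use ex conv in \<open>auto simp: a_def\<close>)
next
  case False
  let ?A = "s0 ` {1..N}"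
  have fin: "finite ?A" and ne: "?A \<noteq> {}" using assms(1) by auto
  have bd: "Min ?A \<le> sstar" "sstar \<le> Max ?A" using hull_bd[OF fin ne assms(2)] by auto
  obtain p where p: "p \<in> {1..N}" "s0 p = Min ?A" using Min_in[OF fin ne] by auto
  obtain q where q: "q \<in> {1..N}" "s0 q = Max ?A" using Max_in[OF fin ne] by auto
  have lp: "s0 p < sstar" using bd p False by force
  have lq: "sstar < s0 q" using bd q False by force
  have pq: "p \<noteq> q" using lp lq by auto
  define D where "D = s0 q - s0 p"
  have D: "D > 0" using lp lq by (simp add: D_def)
  define \<alpha> where "\<alpha> = 2 / D * (sstar - s0 p)"
  define \<beta> where "\<beta> = 2 / D * (s0 q - sstar)"
  have Dn: "D \<noteq> 0" using D by simp
  have aD: "\<alpha> * D = 2 * (sstar - s0 p)" "\<beta> * D = 2 * (s0 q - sstar)"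
    using Dn unfolding \<alpha>_def \<beta>_def by (simp_all add: field_simps)
  have ab: "\<alpha> + \<beta> = 2"
  proof -
    have "(\<alpha> + \<beta>) * D = 2 * D" using aD by (simp add: distrib_right D_def algebra_simps)
    thus ?thesis using Dn by simp
  qed
  have abpos: "\<alpha> \<ge> 0" "\<beta> \<ge> 0" using D lp lq by (auto simp: \<alpha>_def \<beta>_def)
  have mval: "\<beta> * s0 p + \<alpha> * s0 q = 2 * sstar"
  proof -
    have "(\<beta> * s0 p + \<alpha> * s0 q) * D = (\<beta> * D) * s0 p + (\<alpha> * D) * s0 q" by (simp add: algebra_simps)
    also have "\<dots> = 2 * (s0 q - sstar) * s0 p + 2 * (sstar - s0 p) * s0 q" by (simp only: aD)
    also have "\<dots> = (2 * sstar) * D" by (simp add: D_def algebra_simps)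
    finally show ?thesis using Dn by simp
  qed
  define a :: "nat \<Rightarrow> nat \<Rightarrow> real" where "a = (\<lambda>i j. if i = p \<and> j = q then \<alpha> else if i = q \<and> j = p then \<beta>
      else if i \<noteq> p \<and> i \<noteq> q \<and> j = p then 1 else 0)"
  define S where "S = (\<lambda>t i. if i = p \<or> i = q then sstar + (s0 i - sstar) * exp (-2*t)
      else sstar + (sstar - s0 p) * exp (-2*t) + (s0 i - 2 * sstar + s0 p) * exp (-1*t))"
  have ex: "opinion_solution N a s0 S"
    unfolding opinion_solution_def
  proof (intro conjI ballI allI impI)
    fix i assume "i \<in> {1..N}" thus "S 0 i = s0 i" by (simp add: S_def)
  next
    fix i t assume i: "i \<in> {1..N}" and t: "(0::real) \<le> t"
    show "((\<lambda>\<tau>. S \<tau> i) has_real_derivative (\<Sum>j\<in>{1..N} - {i}. a i j * (S t j - S t i))) (at t within {0..})"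
    proof (cases "i = p")
      case True
      have "(\<Sum>j\<in>{1..N} - {i}. a i j * (S t j - S t i)) = a i q * (S t q - S t i)"
        using True q(1) pq by (intro sum_single[where a="a i" and x="\<lambda>j. S t j - S t i"]) (auto simp: a_def)
      also have "\<dots> = (\<alpha> * D) * exp (-2*t)" using True pq
        by (simp add: a_def S_def D_def algebra_simps)
      also have "\<dots> = (s0 i - sstar) * (exp (-2*t) * (- 2))" using True unfolding aD
        by (simp add: algebra_simps)
      finally have e: "(\<Sum>j\<in>{1..N} - {i}. a i j * (S t j - S t i)) = (s0 i - sstar) * (exp (-2*t) * (- 2))" .
      have "((\<lambda>\<tau>. sstar + (s0 i - sstar) * exp (-2*\<tau>)) has_real_derivative (s0 i - sstar) * (exp (-2*t) * (- 2))) (at t within {0..})"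
        by (auto intro!: derivative_eq_intros)
      thus ?thesis unfolding e using True by (simp add: S_def)
    next
      case np: False
      show ?thesis
      proof (cases "i = q")
        case True
        have e: "(\<Sum>j\<in>{1..N} - {q}. a q j * (S t j - S t q)) = (s0 q - sstar) * (exp (-2*t) * (- 2))"
        proof -
          have "(\<Sum>j\<in>{1..N} - {q}. a q j * (S t j - S t q)) = a q p * (S t p - S t q)"
            by (intro sum_single[where a="a q" and x="\<lambda>j. S t j - S t q"]) (use p(1) pq in \<open>auto simp: a_def\<close>)
          also have "\<dots> = \<beta> * (- D * exp (-2*t))"
          proof -
            have aqp: "a q p = \<beta>" using pq unfolding a_def by auto
            have Sd: "S t p - S t q = - D * exp (-2*t)" by (simp add: S_def D_def algebra_simps)
            show ?thesis unfolding aqp Sd ..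
          qed
          also have "\<dots> = - (\<beta> * D) * exp (-2*t)" by (simp add: algebra_simps)
          also have "\<dots> = - (2 * (s0 q - sstar)) * exp (-2*t)" by (simp only: aD(2))
          also have "\<dots> = (s0 q - sstar) * (exp (-2*t) * (- 2))" by (simp add: algebra_simps)
          finally show ?thesis .
        qed
        have deriv: "((\<lambda>\<tau>. sstar + (s0 q - sstar) * exp (-2*\<tau>)) has_real_derivative (s0 q - sstar) * (exp (-2*t) * (- 2))) (at t within {0..})"
          by (auto intro!: derivative_eq_intros)
        have Sq: "(\<lambda>\<tau>. S \<tau> q) = (\<lambda>\<tau>. sstar + (s0 q - sstar) * exp (-2*\<tau>))" by (simp add: S_def)
        show ?thesis unfolding True e Sq by (rule deriv)
      next
        case nq: False
        have "(\<Sum>j\<in>{1..N} - {i}. a i j * (S t j - S t i)) = a i p * (S t p - S t i)"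
          using np nq p(1) pq by (intro sum_single[where a="a i" and x="\<lambda>j. S t j - S t i"]) (auto simp: a_def)
        also have "\<dots> = (sstar - s0 p) * (exp (-2*t) * (- 2)) + (s0 i - 2 * sstar + s0 p) * (exp (-1*t) * (-1))"
          using np nq pq by (simp add: a_def S_def algebra_simps)
        finally have e: "(\<Sum>j\<in>{1..N} - {i}. a i j * (S t j - S t i)) = (sstar - s0 p) * (exp (-2*t) * (- 2)) + (s0 i - 2 * sstar + s0 p) * (exp (-1*t) * (-1))" .
        have "((\<lambda>\<tau>. sstar + (sstar - s0 p) * exp (-2*\<tau>) + (s0 i - 2 * sstar + s0 p) * exp (-1*\<tau>)) has_real_derivative (sstar - s0 p) * (exp (-2*t) * (- 2)) + (s0 i - 2 * sstar + s0 p) * (exp (-1*t) * (-1))) (at t within {0..})"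
          by (auto intro!: derivative_eq_intros)
        thus ?thesis unfolding e using np nq by (simp add: S_def)
      qed
    qed
  qed
  have conv: "((\<lambda>t. s t i) \<longlongrightarrow> sstar) at_top" if s: "opinion_solution N a s0 s" and i: "i \<in> {1..N}" for s i
  proof -
    have s0e: "s 0 j = s0 j" if "j \<in> {1..N}" for j using s that unfolding opinion_solution_def by blast
    have dp: "((\<lambda>\<tau>. s \<tau> p) has_real_derivative \<alpha> * (s t q - s t p)) (at t within {0..})" if "t \<ge> 0" for t
      using sol_deriv[OF s p(1) q(1)] pq that by (auto simp: a_def)
    have dq: "((\<lambda>\<tau>. s \<tau> q) has_real_derivative \<beta> * (s t p - s t q)) (at t within {0..})" if "t \<ge> 0" for t
      using sol_deriv[OF s q(1) p(1)] pq that by (auto simp: a_def)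
    have "\<forall>t\<ge>0. ((\<lambda>\<tau>. \<beta> * s \<tau> p + \<alpha> * s \<tau> q) has_real_derivative (-0 * (\<beta> * s t p + \<alpha> * s t q))) (at t within {0..})"
    proof (intro allI impI)
      fix t :: real assume t: "t \<ge> 0"
      have "((\<lambda>\<tau>. \<beta> * s \<tau> p + \<alpha> * s \<tau> q) has_real_derivative \<beta> * (\<alpha> * (s t q - s t p)) + \<alpha> * (\<beta> * (s t p - s t q))) (at t within {0..})"
        by (intro DERIV_add DERIV_cmult dp dq t)
      thus "((\<lambda>\<tau>. \<beta> * s \<tau> p + \<alpha> * s \<tau> q) has_real_derivative (-0 * (\<beta> * s t p + \<alpha> * s t q))) (at t within {0..})"
        by (simp add: algebra_simps)
    qed
    from exp_unique[OF this] have M: "\<forall>t\<ge>0. \<beta> * s t p + \<alpha> * s t q = 2 * sstar"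
      using s0e[OF p(1)] s0e[OF q(1)] mval by simp
    have "\<forall>t\<ge>0. ((\<lambda>\<tau>. s \<tau> q - s \<tau> p) has_real_derivative (-2 * (s t q - s t p))) (at t within {0..})"
    proof (intro allI impI)
      fix t :: real assume t: "t \<ge> 0"
      have "((\<lambda>\<tau>. s \<tau> q - s \<tau> p) has_real_derivative \<beta> * (s t p - s t q) - \<alpha> * (s t q - s t p)) (at t within {0..})"
        by (intro DERIV_diff dp dq t)
      moreover have "\<beta> * (s t p - s t q) - \<alpha> * (s t q - s t p) = -(\<alpha> + \<beta>) * (s t q - s t p)"
        by (simp add: algebra_simps)
      ultimately show "((\<lambda>\<tau>. s \<tau> q - s \<tau> p) has_real_derivative (-2 * (s t q - s t p))) (at t within {0..})"
        using ab by simp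
    qed
    from exp_unique[OF this] have Dd: "\<forall>t\<ge>0. s t q - s t p = D * exp (-2*t)"
      using s0e[OF p(1)] s0e[OF q(1)] by (simp add: D_def)
    have spf: "s t p = sstar + (s0 p - sstar) * exp (-2*t)" if t: "t \<ge> 0" for t
    proof -
      have e1: "\<beta> * s t p + \<alpha> * s t q = 2 * sstar" using M t by auto
      have e2: "s t q = s t p + D * exp (-2*t)" using Dd t by force
      have "\<beta> * s t p + \<alpha> * (s t p + D * exp (-2*t)) = 2 * sstar" using e1 e2 by simp
      hence "(\<alpha> + \<beta>) * s t p + (\<alpha> * D) * exp (-2*t) = 2 * sstar" by (simp add: algebra_simps)
      hence h: "2 * s t p + 2 * (sstar - s0 p) * exp (-2*t) = 2 * sstar" unfolding ab aD(1) by simp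
      have "s t p = sstar - (sstar - s0 p) * exp (-2*t)" using h by linarith
      thus ?thesis by (simp add: algebra_simps)
    qed
    have sqf: "s t q = sstar + (s0 q - sstar) * exp (-2*t)" if t: "t \<ge> 0" for t
      using spf[OF t] Dd[rule_format, OF t] by (simp add: D_def algebra_simps)
    show ?thesis
    proof (cases "i = p \<or> i = q")
      case True
      hence "\<forall>t\<ge>0. s t i = sstar + (s0 i - sstar) * exp (-2*t)" using spf sqf by auto
      thus ?thesis by (rule ev_lim) (rule lim1, simp)
    next
      case False
      let ?g = "\<lambda>t::real. sstar + (sstar - s0 p) * exp (-2*t)"
      have "\<forall>t\<ge>0. ((\<lambda>\<tau>. s \<tau> i - ?g \<tau>) has_real_derivative (-1 * (s t i - ?g t))) (at t within {0..})"
      proof (intro allI impI)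
        fix t :: real assume t: "t \<ge> 0"
        have "((\<lambda>\<tau>. s \<tau> i) has_real_derivative a i p * (s t p - s t i)) (at t within {0..})"
          using sol_deriv[OF s i p(1)] False t by (auto simp: a_def)
        moreover have "(?g has_real_derivative (sstar - s0 p) * (exp (-2*t) * (-2))) (at t within {0..})"
          by (auto intro!: derivative_eq_intros)
        ultimately have d: "((\<lambda>\<tau>. s \<tau> i - ?g \<tau>) has_real_derivative a i p * (s t p - s t i) - (sstar - s0 p) * (exp (-2*t) * (-2))) (at t within {0..})"
          by (rule DERIV_diff)
        have aip: "a i p = 1" using False unfolding a_def by simp
        have eqn: "a i p * (s t p - s t i) - (sstar - s0 p) * (exp (-2*t) * (-2)) = -1 * (s t i - ?g t)"
          unfolding aip spf[OF t] by (simp add: algebra_simps)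
        show "((\<lambda>\<tau>. s \<tau> i - ?g \<tau>) has_real_derivative (-1 * (s t i - ?g t))) (at t within {0..})"
          using d by (simp only: eqn)
      qed
      note D1 = this
      have "\<forall>t\<ge>0. s t i = sstar + (sstar - s0 p) * exp (-2*t) + (s0 i - 2 * sstar + s0 p) * exp (-1*t)"
      proof (intro allI impI)
        fix t :: real assume t: "t \<ge> 0"
        have h: "s t i - ?g t = (s 0 i - ?g 0) * exp (-1*t)" by (rule exp_unique[OF D1 t])
        have g0: "s 0 i - ?g 0 = s0 i - 2 * sstar + s0 p" using s0e[OF i] by simp
        have "s t i = ?g t + (s0 i - 2 * sstar + s0 p) * exp (-1*t)" using h unfolding g0 by linarith
        thus "s t i = sstar + (sstar - s0 p) * exp (-2*t) + (s0 i - 2 * sstar + s0 p) * exp (-1*t)" by simp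
      qed
      thus ?thesis by (rule ev_lim) (rule lim2, simp_all)
    qed
  qed
  show ?thesis
  proof (intro exI[of _ a] conjI ballI impI allI)
    fix i j assume "i \<in> {1..N}" "j \<in> {1..N}" "i \<noteq> j"
    show "0 \<le> a i j" using abpos unfolding a_def by simp
  next
    show "\<exists>s. opinion_solution N a s0 s" using ex by blast
  next
    fix s i assume "opinion_solution N a s0 s" "i \<in> {1..N}"
    thus "((\<lambda>t. s t i) \<longlongrightarrow> sstar) at_top" by (rule conv)
  qed
qed
end
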